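(* Let $n\ge 1$, $D\ge 1$, and let $X_n=\{\mathbf{x}^0,\ldots,\mathbf{x}^{n-1}\}\subseteq\{0,1\}^D$ consist of $n$ pairwise distinct vectors. Then there is a three-layer Boolean threshold network with $D$ input nodes, $D^2$ hidden nodes and $2\lceil\log_2 n\rceil$ output nodes whose computed map $\mathbf{f}:\{0,1\}^D\to\{0,1\}^{2\lceil\log_2 n\rceil}$ satisfies $\mathbf{f}(\mathbf{x}^i)\ne\mathbf{f}(\mathbf{x}^j)$ for all $i\neq j$.
   Context: A Boolean threshold function is a map $\{0,1\}^h\to\{0,1\}$ of the form $\mathbf{u}\mapsto[\mathbf{a}\cdot\mathbf{u}\ge\theta]$ (value $1$ iff $\mathbf{a}\cdot\mathbf{u}\ge\theta$) with $\mathbf{a}\in\mathbb{Z}^h$, $\theta\in\mathbb{Z}$. An $L$-layer Boolean threshold network has layers $1,\ldots,L$ of given sizes; layer $1$ is the input; for $t=1,\ldots,L-1$, each node of layer $t+1$ takes as value a Boolean threshold function of the vector of values of layer $t$. The network computes the map from the input vector to the vector of values of layer $L$. Layers $2,\ldots,L-1$ are hidden layers. *)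

theory Defs
  imports Complex_Main
begin

text \<open>Boolean vectors in {0,1}^h are bool lists of length h (True = 1).\<close>

definition threshold_fn :: "int list \<Rightarrow> int \<Rightarrow> bool list \<Rightarrow> bool" where
  "threshold_fn a \<theta> u = ((\<Sum>i<length a. a ! i * of_bool (u ! i)) \<ge> \<theta>)"

definition layer_eval :: "(int list \<times> int) list \<Rightarrow> bool list \<Rightarrow> bool list" where
  "layer_eval W u = map (\<lambda>(a, \<theta>). threshold_fn a \<theta> u) W"

definition layer_wf :: "nat \<Rightarrow> nat \<Rightarrow> (int list \<times> int) list \<Rightarrow> bool" where
  "layer_wf h m W \<longleftrightarrow> length W = m \<and> (\<forall>(a, \<theta>) \<in> set W. length a = h)"

definition threshold_network :: "nat list \<Rightarrow> (int list \<times> int) list list \<Rightarrow> bool" where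
  "threshold_network ls Ws \<longleftrightarrow> ls \<noteq> [] \<and> length Ws = length ls - 1 \<and>
     (\<forall>t < length Ws. layer_wf (ls ! t) (ls ! Suc t) (Ws ! t))"

definition network_eval :: "(int list \<times> int) list list \<Rightarrow> bool list \<Rightarrow> bool list" where
  "network_eval Ws x = foldl (\<lambda>u W. layer_eval W u) x Ws"

end

theory Submission
  imports Defs
begin

definition cnt :: "nat set \<Rightarrow> bool list \<Rightarrow> int" where
  "cnt S x = (\<Sum>i\<in>S. of_bool (x ! i))"

lemma card_filter_sum:
  assumes "finite A"
  shows "card {p\<in>A. Q p} = (\<Sum>p\<in>A. if Q p then 1 else (0::nat))"
  using assms by (simp add: sum.If_cases Int_def conj_commute)

lemma cnt_insert:
  assumes "finite S" "i0 \<notin> S"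
  shows "cnt (insert i0 S) x = of_bool (x ! i0) + cnt S x"
  using assms by (simp add: cnt_def)

lemma half_count:
  assumes "i0 < D" "x ! i0 \<noteq> y ! i0"
  shows "2 * card {S \<in> Pow {..<D}. even (cnt S x + cnt S y)} = 2 ^ D"
proof -
  define E where "E = {S \<in> Pow {..<D}. even (cnt S x + cnt S y)}"
  define Od where "Od = {S \<in> Pow {..<D}. odd (cnt S x + cnt S y)}"
  define f where "f S = (if i0 \<in> S then S - {i0} else insert i0 S)" for S
  have one: "of_bool (x ! i0) + of_bool (y ! i0) = (1::int)" using assms(2) by auto
  have key: "even (cnt (f S) x + cnt (f S) y) \<longleftrightarrow> odd (cnt S x + cnt S y)"
    if "S \<subseteq> {..<D}" for S
  proof -
    have fin: "finite S" using that finite_subset by blast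
    show ?thesis
    proof (cases "i0 \<in> S")
      case True
      have cx: "cnt S z = of_bool (z ! i0) + cnt (S - {i0}) z" for z
        by (metis True cnt_insert fin finite_Diff insert_Diff Diff_iff singletonI)
      have "cnt S x + cnt S y = 1 + (cnt (S - {i0}) x + cnt (S - {i0}) y)"
        using cx[of x] cx[of y] one by simp
      then show ?thesis using True by (simp add: f_def)
    next
      case False
      have "cnt (insert i0 S) x + cnt (insert i0 S) y = 1 + (cnt S x + cnt S y)"
        using False fin by (simp add: cnt_insert one[symmetric])
      then show ?thesis using False by (simp add: f_def)
    qed
  qed
  have fsub: "f S \<subseteq> {..<D}" if "S \<subseteq> {..<D}" for S
    using that assms(1) by (auto simp: f_def)
  have ff: "f (f S) = S" for S by (auto simp: f_def)
  have "bij_betw f E Od"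
    apply (rule bij_betw_byWitness[where f'=f])
    using key fsub ff by (auto simp: E_def Od_def)
  then have "card E = card Od" by (rule bij_betw_same_card)
  moreover have "card E + card Od = card (Pow {..<D::nat})"
  proof -
    have "E \<union> Od = Pow {..<D}" "E \<inter> Od = {}" by (auto simp: E_def Od_def)
    moreover have "finite E" "finite Od" by (auto simp: E_def Od_def)
    ultimately show ?thesis by (metis card_Un_disjoint)
  qed
  ultimately show ?thesis by (simp add: card_Pow E_def)
qed

lemma avg:
  assumes "finite P" "\<forall>p\<in>P. \<exists>i<D. u p ! i \<noteq> v p ! i"
  shows "\<exists>S\<in>Pow {..<D}. 2 * card {p\<in>P. even (cnt S (u p) + cnt S (v p))} \<le> card P"
proof (rule ccontr)
  assume "\<not> ?thesis"
  then have lt: "\<forall>S\<in>Pow {..<D}. card P < 2 * card {p\<in>P. even (cnt S (u p) + cnt S (v p))}"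
    using not_le by blast
  have "(\<Sum>S\<in>Pow {..<D}. card P) < (\<Sum>S\<in>Pow {..<D}. 2 * card {p\<in>P. even (cnt S (u p) + cnt S (v p))})"
  proof (rule sum_strict_mono)
    show "finite (Pow {..<D})" by simp
    show "Pow {..<D} \<noteq> {}" by blast
    fix S assume "S \<in> Pow {..<D}"
    then show "card P < 2 * card {p\<in>P. even (cnt S (u p) + cnt S (v p))}"
      using lt by blast
  qed
  also have "\<dots> = (\<Sum>S\<in>Pow {..<D}. \<Sum>p\<in>P. 2 * (if even (cnt S (u p) + cnt S (v p)) then 1 else 0))"
    by (simp add: card_filter_sum assms(1) sum_distrib_left)
  also have "\<dots> = (\<Sum>p\<in>P. \<Sum>S\<in>Pow {..<D}. 2 * (if even (cnt S (u p) + cnt S (v p)) then 1 else 0))"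
    by (rule sum.swap)
  also have "\<dots> = (\<Sum>p\<in>P. 2 * card {S\<in>Pow {..<D}. even (cnt S (u p) + cnt S (v p))})"
    by (rule sum.cong[OF refl], subst card_filter_sum, simp, simp add: sum_distrib_left)
  also have "\<dots> = (\<Sum>p\<in>P. 2 ^ D)"
  proof (rule sum.cong[OF refl])
    fix p assume "p \<in> P"
    then obtain i where "i < D" "u p ! i \<noteq> v p ! i" using assms(2) by blast
    then show "2 * card {S\<in>Pow {..<D}. even (cnt S (u p) + cnt S (v p))} = 2 ^ D"
      by (rule half_count)
  qed
  finally show False by (simp add: card_Pow mult.commute)
qed

lemma greedy:
  "finite P \<Longrightarrow> \<forall>p\<in>P. \<exists>i<D. u p ! i \<noteq> v p ! i \<Longrightarrow> card P < 2 ^ m \<Longrightarrow>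
   \<exists>Ss. length Ss = m \<and> set Ss \<subseteq> Pow {..<D} \<and>
        (\<forall>p\<in>P. \<exists>S\<in>set Ss. odd (cnt S (u p) + cnt S (v p)))"
proof (induction m arbitrary: P)
  case 0
  then show ?case by auto
next
  case (Suc m)
  obtain S where S: "S \<in> Pow {..<D}"
    "2 * card {p\<in>P. even (cnt S (u p) + cnt S (v p))} \<le> card P"
    using avg[OF Suc.prems(1,2)] by blast
  define P' where "P' = {p\<in>P. even (cnt S (u p) + cnt S (v p))}"
  have "card P' < 2 ^ m" using S(2) Suc.prems(3) by (simp add: P'_def)
  moreover have "finite P'" using Suc.prems(1) by (simp add: P'_def)
  moreover have "\<forall>p\<in>P'. \<exists>i<D. u p ! i \<noteq> v p ! i" using Suc.prems(2) by (auto simp: P'_def)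
  ultimately obtain Ss where Ss: "length Ss = m" "set Ss \<subseteq> Pow {..<D}"
    "\<forall>p\<in>P'. \<exists>S\<in>set Ss. odd (cnt S (u p) + cnt S (v p))"
    using Suc.IH by blast
  show ?case
    apply (rule exI[of _ "S # Ss"])
    using Ss S(1) by (auto simp: P'_def)
qed

lemma n_le_pow:
  assumes "n \<ge> (1::nat)"
  shows "n \<le> 2 ^ nat \<lceil>log 2 (real n)\<rceil>"
proof -
  have "real n = 2 powr log 2 (real n)" using assms by simp
  also have "\<dots> \<le> 2 powr real_of_int \<lceil>log 2 (real n)\<rceil>"
    by (rule powr_mono) auto
  also have "\<dots> = 2 powr real (nat \<lceil>log 2 (real n)\<rceil>)"
    using assms by simp
  also have "\<dots> = 2 ^ nat \<lceil>log 2 (real n)\<rceil>" by (simp add: powr_realpow)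
  finally show ?thesis by (metis of_nat_le_iff of_nat_numeral of_nat_power)
qed


definition ind :: "nat \<Rightarrow> nat set \<Rightarrow> int list" where
  "ind D S = map (\<lambda>i. if i \<in> S then 1 else 0) [0..<D]"

lemma thr_ind:
  assumes "length x = D" "S \<subseteq> {..<D}"
  shows "threshold_fn (ind D S) \<theta> x = (cnt S x \<ge> \<theta>)"
proof -
  have "(\<Sum>i<length (ind D S). ind D S ! i * of_bool (x ! i)) =
        (\<Sum>i<D. if i \<in> S then of_bool (x ! i) else 0)"
    by (rule sum.cong) (auto simp: ind_def)
  also have "\<dots> = sum (\<lambda>i. of_bool (x ! i)) ({..<D} \<inter> S)"
    by (rule sum.inter_restrict[symmetric]) simp
  also have "\<dots> = cnt S x" using assms(2) by (simp add: cnt_def Int_absorb1)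
  finally show ?thesis by (simp add: threshold_fn_def)
qed

lemma cnt_bounds:
  assumes "S \<subseteq> {..<D}"
  shows "0 \<le> cnt S x \<and> cnt S x \<le> int D"
proof -
  have fin: "finite S" using assms finite_subset by blast
  have "cnt S x \<le> (\<Sum>i\<in>S. 1)" unfolding cnt_def by (rule sum_mono) auto
  also have "\<dots> = int (card S)" by simp
  also have "\<dots> \<le> int D" using card_mono[OF _ assms] by simp
  finally show ?thesis by (simp add: cnt_def sum_nonneg)
qed

lemma alt_sum_nat: "(\<Sum>t<M. (-1::int) ^ t) = (if odd M then 1 else 0)"
  by (induction M) auto

lemma alt_sum:
  assumes "0 \<le> C" "C \<le> int N"
  shows "(\<Sum>t<N. (-1::int) ^ t * of_bool (C \<ge> int t + 1)) = (if odd C then 1 else 0)"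
proof -
  define M where "M = nat C"
  have CM: "C = int M" using assms(1) by (simp add: M_def)
  have MN: "M \<le> N" using assms(2) CM by simp
  have "(\<Sum>t<N. (-1::int) ^ t * of_bool (C \<ge> int t + 1)) =
        (\<Sum>t<N. if t \<in> {..<M} then (-1::int) ^ t else 0)"
    by (rule sum.cong) (auto simp: CM)
  also have "\<dots> = sum (\<lambda>t. (-1::int) ^ t) ({..<N} \<inter> {..<M})"
    by (simp add: sum.inter_restrict)
  also have "{..<N} \<inter> {..<M} = {..<M}" using MN by auto
  finally show ?thesis by (simp add: alt_sum_nat CM)
qed

lemma block_sum:
  fixes g :: "nat \<Rightarrow> int"
  assumes "r < D"
  shows "(\<Sum>q<D*D. if q div D = r then g (q mod D) else 0) = (\<Sum>t<D. g t)"
proof -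
  have "(\<Sum>q<D*D. if q div D = r then g (q mod D) else 0) =
        sum (\<lambda>q. g (q mod D)) ({..<D*D} \<inter> {q. q div D = r})"
    by (simp add: sum.inter_restrict)
  also have "{..<D*D} \<inter> {q. q div D = r} = {0 + r*D..<D + r*D}"
  proof -
    have D0: "D > 0" using assms by simp
    have iff: "q div D = r \<longleftrightarrow> r*D \<le> q \<and> q < D + r*D" for q
      using D0 by (metis div_nat_eqI div_times_less_eq_dividend dividend_less_div_times
    mult.commute mult_Suc)
    have le: "D + r*D \<le> D*D"
    proof -
      have "Suc r \<le> D" using assms by simp
      then have "Suc r * D \<le> D * D" by (rule mult_le_mono1)
      then show ?thesis by simp
    qed
    show ?thesis
    proof (rule set_eqI)
      fix q
      show "q \<in> {..<D*D} \<inter> {q. q div D = r} \<longleftrightarrow> q \<in> {0 + r*D..<D + r*D}"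
        using iff[of q] le by auto
    qed
  qed
  also have "sum (\<lambda>q. g (q mod D)) {0 + r*D..<D + r*D} = (\<Sum>t\<in>{0..<D}. g ((t + r*D) mod D))"
    by (rule sum.shift_bounds_nat_ivl)
  also have "\<dots> = (\<Sum>t<D. g t)"
  proof (rule sum.cong)
    show "{0..<D} = {..<D}" by auto
    fix t assume "t \<in> {..<D}"
    then show "g ((t + r * D) mod D) = g t" by simp
  qed
  finally show ?thesis .
qed


definition Wa :: "nat \<Rightarrow> nat set list \<Rightarrow> (int list \<times> int) list" where
  "Wa D Ss = map (\<lambda>q. (ind D (if q div D < length Ss then Ss ! (q div D) else {}), int (q mod D) + 1)) [0..<D*D]"

definition Wb :: "nat \<Rightarrow> nat \<Rightarrow> (int list \<times> int) list" where
  "Wb D K = map (\<lambda>r. (map (\<lambda>q. if q div D = r then (-1::int) ^ (q mod D) else 0) [0..<D*D], 1::int)) [0..<K]"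

lemma net_out:
  assumes "length x = D" "set Ss \<subseteq> Pow {..<D}" "length Ss \<le> D" "length Ss \<le> K" "r < length Ss"
  shows "network_eval [Wa D Ss, Wb D K] x ! r = odd (cnt (Ss ! r) x)"
proof -
  define h where "h = layer_eval (Wa D Ss) x"
  define C where "C = cnt (Ss ! r) x"
  have SSsub: "(if q < length Ss then Ss ! q else {}) \<subseteq> {..<D}" for q
  proof (cases "q < length Ss")
    case True
    then have "Ss ! q \<in> set Ss" by (rule nth_mem)
    then have "Ss ! q \<in> Pow {..<D}" using assms(2) by blast
    then show ?thesis using True by simp
  qed simp
  have lh: "length h = D * D" by (simp add: h_def layer_eval_def Wa_def)
  have hq: "h ! q = (cnt (if q div D < length Ss then Ss ! (q div D) else {}) x \<ge> int (q mod D) + 1)"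
    if "q < D * D" for q
  proof -
    have "h ! q = threshold_fn (ind D (if q div D < length Ss then Ss ! (q div D) else {})) (int (q mod D) + 1) x"
      using that by (simp add: h_def layer_eval_def Wa_def)
    then show ?thesis by (simp only: thr_ind[OF assms(1) SSsub])
  qed
  have rK: "r < K" "r < D" using assms by auto
  have Ssr: "Ss ! r \<subseteq> {..<D}" using SSsub[of r] assms(5) by simp
  have "network_eval [Wa D Ss, Wb D K] x = layer_eval (Wb D K) h"
    by (simp add: network_eval_def h_def)
  also have "\<dots> ! r = threshold_fn (map (\<lambda>q. if q div D = r then (-1::int) ^ (q mod D) else 0) [0..<D*D]) 1 h"
    using rK by (simp add: layer_eval_def Wb_def)
  also have "\<dots> = ((\<Sum>q<D*D. if q div D = r then (-1::int) ^ (q mod D) * of_bool (C \<ge> int (q mod D) + 1) else 0) \<ge> 1)"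
    unfolding threshold_fn_def
  proof -
    have "(\<Sum>i<length (map (\<lambda>q. if q div D = r then (-1::int) ^ (q mod D) else 0) [0..<D*D]).
            map (\<lambda>q. if q div D = r then (-1::int) ^ (q mod D) else 0) [0..<D*D] ! i * of_bool (h ! i))
          = (\<Sum>q<D*D. if q div D = r then (-1::int) ^ (q mod D) * of_bool (C \<ge> int (q mod D) + 1) else 0)"
      by (rule sum.cong) (auto simp: hq C_def assms(5))
    then show "(1 \<le> (\<Sum>i<length (map (\<lambda>q. if q div D = r then (-1::int) ^ (q mod D) else 0) [0..<D*D]).
            map (\<lambda>q. if q div D = r then (-1::int) ^ (q mod D) else 0) [0..<D*D] ! i * of_bool (h ! i)))
          = (1 \<le> (\<Sum>q<D*D. if q div D = r then (-1::int) ^ (q mod D) * of_bool (C \<ge> int (q mod D) + 1) else 0))"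
      by simp
  qed
  also have "(\<Sum>q<D*D. if q div D = r then (-1::int) ^ (q mod D) * of_bool (C \<ge> int (q mod D) + 1) else 0)
      = (\<Sum>t<D. (-1::int) ^ t * of_bool (C \<ge> int t + 1))"
    by (rule block_sum[OF rK(2)])
  also have "\<dots> = (if odd C then 1 else 0)"
    using cnt_bounds[OF Ssr] by (intro alt_sum) (auto simp: C_def)
  finally show ?thesis by (simp add: C_def)
qed


theorem theorem9:
  fixes n D :: nat and X :: "nat \<Rightarrow> bool list"
  assumes "n \<ge> 1" and "D \<ge> 1"
    and "\<forall>i<n. length (X i) = D"
    and "inj_on X {..<n}"
  shows "\<exists>Ws. threshold_network [D, D ^ 2, 2 * nat \<lceil>log 2 (real n)\<rceil>] Ws \<and>
           (\<forall>i<n. \<forall>j<n. i \<noteq> j \<longrightarrow> network_eval Ws (X i) \<noteq> network_eval Ws (X j))"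
proof -
  define k where "k = nat \<lceil>log 2 (real n)\<rceil>"
  define K where "K = 2 * k"
  have nk: "n \<le> 2 ^ k" unfolding k_def by (rule n_le_pow[OF assms(1)])
  have diff: "\<exists>i0<D. X i ! i0 \<noteq> X j ! i0" if "i < n" "j < n" "i \<noteq> j" for i j
  proof (rule ccontr)
    assume "\<not> ?thesis"
    then have "X i = X j" using assms(3) that by (intro nth_equalityI) auto
    then show False using assms(4) that by (auto simp: inj_on_def)
  qed
  have "\<exists>Ss. length Ss \<le> D \<and> length Ss \<le> K \<and> set Ss \<subseteq> Pow {..<D} \<and>
        (\<forall>i<n. \<forall>j<n. i \<noteq> j \<longrightarrow> (\<exists>S\<in>set Ss. odd (cnt S (X i) + cnt S (X j))))"
  proof (cases "D \<le> K")
    case True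
    show ?thesis
    proof (intro exI[of _ "map (\<lambda>i. {i}) [0..<D]"] conjI allI impI)
      fix i j assume ij: "i < n" "j < n" "i \<noteq> j"
      obtain i0 where i0: "i0 < D" "X i ! i0 \<noteq> X j ! i0" using diff[OF ij] by blast
      have "odd (cnt {i0} (X i) + cnt {i0} (X j))" using i0(2) by (cases "X i ! i0") (auto simp: cnt_def)
      then show "\<exists>S\<in>set (map (\<lambda>i. {i}) [0..<D]). odd (cnt S (X i) + cnt S (X j))"
        using i0(1) by auto
    qed (use True in auto)
  next
    case False
    define P where "P = {p. fst p < n \<and> snd p < n \<and> fst p \<noteq> snd p}"
    have Psub: "P \<subseteq> ({..<n} \<times> {..<n}) - {(0,0)}" by (auto simp: P_def)
    have finP: "finite P" by (rule finite_subset[OF Psub]) auto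
    have "card P \<le> card (({..<n} \<times> {..<n}) - {(0,0)})" by (rule card_mono[OF _ Psub]) auto
    also have "\<dots> = n * n - 1" using assms(1) by (simp add: card_cartesian_product)
    also have "\<dots> < 2 ^ K"
    proof -
      have "n * n \<le> 2 ^ k * 2 ^ k" using nk nk by (rule mult_le_mono)
      also have "\<dots> = 2 ^ K" by (simp add: K_def mult_2 power_add)
      finally show ?thesis using assms(1) by (metis diff_less le_trans less_one not_le zero_less_one mult_1 mult_le_mono)
    qed
    finally have cP: "card P < 2 ^ K" .
    have wit: "\<forall>p\<in>P. \<exists>i<D. X (fst p) ! i \<noteq> X (snd p) ! i" using diff by (auto simp: P_def)
    obtain Ss where Ss: "length Ss = K" "set Ss \<subseteq> Pow {..<D}"
      "\<forall>p\<in>P. \<exists>S\<in>set Ss. odd (cnt S (X (fst p)) + cnt S (X (snd p)))"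
      using greedy[OF finP wit cP] by blast
    show ?thesis
      apply (rule exI[of _ Ss])
      using Ss False by (auto simp: P_def)
  qed
  then obtain Ss where Ss: "length Ss \<le> D" "length Ss \<le> K" "set Ss \<subseteq> Pow {..<D}"
    "\<forall>i<n. \<forall>j<n. i \<noteq> j \<longrightarrow> (\<exists>S\<in>set Ss. odd (cnt S (X i) + cnt S (X j)))" by blast
  have net: "threshold_network [D, D ^ 2, K] [Wa D Ss, Wb D K]"
  proof -
    have "layer_wf D (D ^ 2) (Wa D Ss)"
      by (auto simp: layer_wf_def Wa_def ind_def power2_eq_square)
    moreover have "layer_wf (D ^ 2) K (Wb D K)"
      by (auto simp: layer_wf_def Wb_def power2_eq_square)
    ultimately show ?thesis
      by (auto simp: threshold_network_def less_Suc_eq)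
  qed
  show ?thesis
  proof (intro exI[of _ "[Wa D Ss, Wb D K]"] conjI allI impI)
    show "threshold_network [D, D ^ 2, 2 * nat \<lceil>log 2 (real n)\<rceil>] [Wa D Ss, Wb D K]"
      using net by (simp add: K_def k_def)
    fix i j assume ij: "i < n" "j < n" "i \<noteq> j"
    obtain S where S: "S \<in> set Ss" "odd (cnt S (X i) + cnt S (X j))" using Ss(4) ij by blast
    obtain r where r: "r < length Ss" "S = Ss ! r" using S(1) by (auto simp: in_set_conv_nth)
    have oi: "network_eval [Wa D Ss, Wb D K] (X i) ! r = odd (cnt S (X i))"
      using net_out[OF _ Ss(3,1,2) r(1)] assms(3) ij r(2) by simp
    have oj: "network_eval [Wa D Ss, Wb D K] (X j) ! r = odd (cnt S (X j))"
      using net_out[OF _ Ss(3,1,2) r(1)] assms(3) ij r(2) by simp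
    show "network_eval [Wa D Ss, Wb D K] (X i) \<noteq> network_eval [Wa D Ss, Wb D K] (X j)"
    proof
      assume "network_eval [Wa D Ss, Wb D K] (X i) = network_eval [Wa D Ss, Wb D K] (X j)"
      then have "odd (cnt S (X i)) = odd (cnt S (X j))" using oi oj by simp
      then show False using S(2) by simp
    qed
  qed
qed

end
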